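(* Let $K$ be a field and $X$ a finite connected poset. The kernel $N=\{\varphi\in\mathrm{LAut}(I(X,K)): \widetilde\varphi=\mathrm{id}\}$ of the homomorphism $\varphi\mapsto\widetilde\varphi$ coincides with $\mathrm{Inn}_1(I(X,K))$, the group of conjugations $f\mapsto\beta f\beta^{-1}$ by elements $\beta\in I(X,K)$ with $\beta(x,x)=1$ for all $x\in X$.
   Context: $I(X,K)$ is the incidence algebra: functions $f:X\times X\to K$ with $f(x,y)=0$ unless $x\le y$, product $(fg)(x,y)=\sum_{x\le t\le y}f(x,t)g(t,y)$; $e_{xy}$ ($x\le y$) is the basis element equal to $1$ at $(x,y)$ and $0$ elsewhere. $\mathrm{LAut}(I(X,K))$ is the group of bijective linear maps preserving $[f,g]=fg-gf$. Let $l(\lfloor x,y\rfloor)$ be the maximum length of a chain in $\{z:x\le z\le y\}$, $L_i=\mathrm{span}_K\{e_{xy}: l(\lfloor x,y\rfloor)=i\}$ ($i\ge0$). For $\varphi\in\mathrm{LAut}(I(X,K))$, $\widetilde\varphi$ is the linear map sending $e_{xy}\in L_i$ to the $L_i$-component of $\varphi(e_{xy})$ in $I(X,K)=\bigoplus_iL_i$. Connected means any two elements are joined by a sequence in which consecutive elements are in a covering relation. *)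

theory Defs
  imports Main "HOL-Library.Function_Algebras"
begin

definition incidence :: "('a::{order,finite} \<Rightarrow> 'a \<Rightarrow> 'k::field) set" where
  "incidence = {f. \<forall>x y. \<not> x \<le> y \<longrightarrow> f x y = 0}"

definition imult :: "('a::{order,finite} \<Rightarrow> 'a \<Rightarrow> 'k::field) \<Rightarrow> ('a \<Rightarrow> 'a \<Rightarrow> 'k) \<Rightarrow> 'a \<Rightarrow> 'a \<Rightarrow> 'k" where
  "imult f g = (\<lambda>x y. \<Sum>t\<in>{t. x \<le> t \<and> t \<le> y}. f x t * g t y)"

definition iunit :: "'a::{order,finite} \<Rightarrow> 'a \<Rightarrow> 'k::field" where
  "iunit = (\<lambda>x y. if x = y then 1 else 0)"

definition ebas :: "'a::{order,finite} \<Rightarrow> 'a \<Rightarrow> 'a \<Rightarrow> 'a \<Rightarrow> 'k::field" where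
  "ebas x y = (\<lambda>u v. if u = x \<and> v = y then 1 else 0)"

definition ibracket :: "('a::{order,finite} \<Rightarrow> 'a \<Rightarrow> 'k::field) \<Rightarrow> ('a \<Rightarrow> 'a \<Rightarrow> 'k) \<Rightarrow> 'a \<Rightarrow> 'a \<Rightarrow> 'k" where
  "ibracket f g = imult f g - imult g f"

definition LAut :: "(('a::{order,finite} \<Rightarrow> 'a \<Rightarrow> 'k::field) \<Rightarrow> ('a \<Rightarrow> 'a \<Rightarrow> 'k)) set" where
  "LAut = {\<phi>. bij_betw \<phi> incidence incidence
      \<and> (\<forall>f\<in>incidence. \<forall>g\<in>incidence. \<phi> (f + g) = \<phi> f + \<phi> g)
      \<and> (\<forall>c. \<forall>f\<in>incidence. \<phi> (\<lambda>x y. c * f x y) = (\<lambda>x y. c * \<phi> f x y))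
      \<and> (\<forall>f\<in>incidence. \<forall>g\<in>incidence. \<phi> (ibracket f g) = ibracket (\<phi> f) (\<phi> g))}"

definition ilen :: "'a::{order,finite} \<Rightarrow> 'a \<Rightarrow> nat" where
  "ilen x y = Max {card C - 1 | C. C \<subseteq> {x..y} \<and> C \<noteq> {} \<and> Complete_Partial_Order.chain (\<le>) C}"

definition Lcomp :: "nat \<Rightarrow> ('a::{order,finite} \<Rightarrow> 'a \<Rightarrow> 'k::field) \<Rightarrow> 'a \<Rightarrow> 'a \<Rightarrow> 'k" where
  "Lcomp i f = (\<lambda>u v. if u \<le> v \<and> ilen u v = i then f u v else 0)"

text \<open>\<phi>~: the linear map sending e_xy (in L_i, i = l(\<lfloor>x,y\<rfloor>)) to the L_i-component of \<phi>(e_xy).\<close>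
definition tilde :: "(('a::{order,finite} \<Rightarrow> 'a \<Rightarrow> 'k::field) \<Rightarrow> ('a \<Rightarrow> 'a \<Rightarrow> 'k))
    \<Rightarrow> ('a \<Rightarrow> 'a \<Rightarrow> 'k) \<Rightarrow> 'a \<Rightarrow> 'a \<Rightarrow> 'k" where
  "tilde \<phi> f = (\<Sum>p\<in>{p. fst p \<le> snd p}.
      (\<lambda>u v. f (fst p) (snd p) * Lcomp (ilen (fst p) (snd p)) (\<phi> (ebas (fst p) (snd p))) u v))"

definition covers :: "'a::order \<Rightarrow> 'a \<Rightarrow> bool" where
  "covers x y \<longleftrightarrow> x < y \<and> \<not> (\<exists>z. x < z \<and> z < y)"

definition poset_connected :: "'a::order itself \<Rightarrow> bool" where
  "poset_connected _ \<longleftrightarrow> (\<forall>x y::'a. (\<lambda>a b. covers a b \<or> covers b a)\<^sup>*\<^sup>* x y)"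

definition Inn1 :: "(('a::{order,finite} \<Rightarrow> 'a \<Rightarrow> 'k::field) \<Rightarrow> ('a \<Rightarrow> 'a \<Rightarrow> 'k)) \<Rightarrow> bool" where
  "Inn1 \<phi> \<longleftrightarrow> (\<exists>\<beta> \<gamma>. \<beta> \<in> incidence \<and> \<gamma> \<in> incidence \<and> (\<forall>x. \<beta> x x = 1)
      \<and> imult \<beta> \<gamma> = iunit \<and> imult \<gamma> \<beta> = iunit
      \<and> (\<forall>f\<in>incidence. \<phi> f = imult (imult \<beta> f) \<gamma>))"

end

theory Submission
  imports Defs
begin

lemma sum_fun_apply: "(sum F A) x = sum (\<lambda>a. F a x) A"
  by (induction A rule: infinite_finite_induct) auto

lemma sum_fun_apply2: "(sum F A) x y = sum (\<lambda>a. F a x y) A"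
  by (simp add: sum_fun_apply)

lemma incidenceI: "(\<And>x y. \<not> x \<le> y \<Longrightarrow> f x y = 0) \<Longrightarrow> f \<in> incidence"
  by (auto simp: incidence_def)

lemma incidenceD: "f \<in> incidence \<Longrightarrow> \<not> x \<le> y \<Longrightarrow> f x y = 0"
  by (auto simp: incidence_def)

lemma imult_inc: "imult f g \<in> incidence"
  unfolding incidence_def imult_def
  by (auto intro!: sum.neutral dest: order_trans)

lemma ebas_inc: "x \<le> y \<Longrightarrow> ebas x y \<in> incidence"
  by (auto simp: incidence_def ebas_def)

lemma iunit_inc: "iunit \<in> incidence"
  by (auto simp: incidence_def iunit_def)

lemma imult_assoc: "imult (imult f g) h = imult f (imult g h)"
proof (intro ext)
  fix x y :: 'a
  let ?T = "{t. x \<le> t \<and> t \<le> y}"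
  have "imult (imult f g) h x y = (\<Sum>t\<in>?T. \<Sum>s\<in>{s. x \<le> s \<and> s \<le> t}. f x s * g s t * h t y)"
    by (simp add: imult_def sum_distrib_right)
  also have "\<dots> = (\<Sum>t\<in>?T. \<Sum>s\<in>{s\<in>?T. s \<le> t}. f x s * g s t * h t y)"
    by (intro sum.cong refl) (auto dest: order_trans)
  also have "\<dots> = (\<Sum>s\<in>?T. \<Sum>t\<in>{t\<in>?T. s \<le> t}. f x s * g s t * h t y)"
    by (rule sum.swap_restrict) auto
  also have "\<dots> = (\<Sum>s\<in>?T. \<Sum>t\<in>{t. s \<le> t \<and> t \<le> y}. f x s * g s t * h t y)"
    by (intro sum.cong refl) (auto dest: order_trans)
  also have "\<dots> = imult f (imult g h) x y"
    by (simp add: imult_def sum_distrib_left mult.assoc)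
  finally show "imult (imult f g) h x y = imult f (imult g h) x y" .
qed

lemma imult_iunit_left: "f \<in> incidence \<Longrightarrow> imult iunit f = f"
proof (intro ext)
  fix x y assume f: "f \<in> incidence"
  have "imult iunit f x y = (\<Sum>t\<in>{t. x \<le> t \<and> t \<le> y}. if t = x then f t y else 0)"
    unfolding imult_def iunit_def by (intro sum.cong) auto
  also have "\<dots> = f x y" using f by (auto simp: incidenceD)
  finally show "imult iunit f x y = f x y" .
qed

lemma imult_iunit_right: "f \<in> incidence \<Longrightarrow> imult f iunit = f"
proof (intro ext)
  fix x y assume f: "f \<in> incidence"
  have "imult f iunit x y = (\<Sum>t\<in>{t. x \<le> t \<and> t \<le> y}. if t = y then f x t else 0)"
    unfolding imult_def iunit_def by (intro sum.cong) auto
  also have "\<dots> = f x y" using f by (auto simp: incidenceD)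
  finally show "imult f iunit x y = f x y" .
qed

lemma imult_add_left: "imult (f + g) h = imult f h + imult g h"
  by (intro ext) (simp add: imult_def algebra_simps sum.distrib)
lemma imult_add_right: "imult h (f + g) = imult h f + imult h g"
  by (intro ext) (simp add: imult_def algebra_simps sum.distrib)
lemma imult_smult_left: "imult (\<lambda>x y. c * f x y) h = (\<lambda>x y. c * imult f h x y)"
  by (auto simp: imult_def algebra_simps sum_distrib_left)
lemma imult_smult_right: "imult h (\<lambda>x y. c * f x y) = (\<lambda>x y. c * imult h f x y)"
  by (auto simp: imult_def algebra_simps sum_distrib_left)

function colv :: "('a::{order,finite} \<Rightarrow> 'a \<Rightarrow> 'k::field) \<Rightarrow> 'a \<Rightarrow> 'a \<Rightarrow> 'k" where
  "colv f v x = (if x = v then 1 else if x < v then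
      (\<Sum>t\<in>{t. x < t \<and> t \<le> v}. f x t * colv f v t) else 0)"
  by auto
termination
  apply (relation "measure (\<lambda>(f,v,x). card {s. x < s})")
   apply simp
  apply (auto intro!: psubset_card_mono)
  done

declare colv.simps[simp del]

lemma colv_self: "colv f v v = 1"
  by (subst colv.simps) simp
lemma colv_less: "x < v \<Longrightarrow> colv f v x = (\<Sum>t\<in>{t. x < t \<and> t \<le> v}. f x t * colv f v t)"
  by (subst colv.simps) simp
lemma colv_not: "\<not> x \<le> v \<Longrightarrow> colv f v x = 0"
  by (subst colv.simps) auto

lemma interval_insert: "(x::'a::order) \<le> v \<Longrightarrow> {t. x \<le> t \<and> t \<le> v} = insert x {t. x < t \<and> t \<le> v}"
  by (auto simp: order_less_le)

lemma sum_interval_split: "(x::'a::{order,finite}) \<le> v \<Longrightarrow>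
  (\<Sum>t\<in>{t. x \<le> t \<and> t \<le> v}. h t) = h x + (\<Sum>t\<in>{t. x < t \<and> t \<le> v}. h t)"
  by (subst interval_insert) (auto simp: sum.insert)

lemma empty_interval: "\<not> (x::'a::order) \<le> v \<Longrightarrow> {t. x \<le> t \<and> t \<le> v} = {}"
  by (auto dest: order_trans)

lemma sum_interval_single: "(\<Sum>t\<in>{t. v \<le> t \<and> t \<le> (v::'a::order)}. h t) = h v"
proof -
  have "{t. v \<le> t \<and> t \<le> v} = {v}" by auto
  thus ?thesis by simp
qed

lemma right_inv:
  fixes \<beta> :: "'a::{order,finite} \<Rightarrow> 'a \<Rightarrow> 'k::field"
  assumes "\<beta> \<in> incidence" "\<forall>x. \<beta> x x = 1"
  shows "\<exists>\<gamma>\<in>incidence. (\<forall>x. \<gamma> x x = 1) \<and> imult \<beta> \<gamma> = iunit"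
proof (intro bexI conjI allI ext)
  define \<gamma> where "\<gamma> = (\<lambda>x v. colv (\<lambda>a b. - \<beta> a b) v x)"
  show "\<gamma> \<in> incidence" by (auto simp: \<gamma>_def incidence_def colv_not)
  show "\<gamma> x x = 1" for x by (simp add: \<gamma>_def colv_self)
  show "imult \<beta> \<gamma> x v = iunit x v" for x v
  proof (cases "x \<le> v")
    case False
    then show ?thesis by (auto simp: imult_def iunit_def empty_interval)
  next
    case True
    show ?thesis
    proof (cases "x = v")
      case True
      then show ?thesis by (simp add: imult_def iunit_def sum_interval_single assms \<gamma>_def colv_self)
    next
      case False
      with \<open>x \<le> v\<close> have xv: "x < v" by simp
      have "imult \<beta> \<gamma> x v = \<beta> x x * \<gamma> x v + (\<Sum>t\<in>{t. x < t \<and> t \<le> v}. \<beta> x t * \<gamma> t v)"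
        unfolding imult_def using \<open>x \<le> v\<close> by (rule sum_interval_split)
      also have "\<gamma> x v = (\<Sum>t\<in>{t. x < t \<and> t \<le> v}. - \<beta> x t * \<gamma> t v)"
        unfolding \<gamma>_def using xv by (rule colv_less)
      finally have "imult \<beta> \<gamma> x v = 0" using assms(2)
        by (simp add: sum_negf)
      then show ?thesis using False by (simp add: iunit_def)
    qed
  qed
qed

lemma two_sided_inv:
  fixes \<beta> :: "'a::{order,finite} \<Rightarrow> 'a \<Rightarrow> 'k::field"
  assumes "\<beta> \<in> incidence" "\<forall>x. \<beta> x x = 1"
  shows "\<exists>\<gamma>\<in>incidence. (\<forall>x. \<gamma> x x = 1) \<and> imult \<beta> \<gamma> = iunit \<and> imult \<gamma> \<beta> = iunit"
proof -
  obtain \<gamma> where g: "\<gamma> \<in> incidence" "\<forall>x. \<gamma> x x = 1" "imult \<beta> \<gamma> = iunit"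
    using right_inv[OF assms] by blast
  obtain \<delta> where d: "\<delta> \<in> incidence" "imult \<gamma> \<delta> = iunit"
    using right_inv[OF g(1,2)] by blast
  have "\<beta> = imult \<beta> (imult \<gamma> \<delta>)" using d assms by (simp add: imult_iunit_right)
  also have "\<dots> = \<delta>" by (simp only: imult_assoc[symmetric] g(3)) (simp add: imult_iunit_left d)
  finally show ?thesis using g d by auto
qed

lemma fixed_zero:
  fixes W :: "'a::{order,finite} \<Rightarrow> 'k::field"
  assumes fx: "\<And>x. (\<Sum>t\<in>{t. x \<le> t \<and> t \<le> v}. G x t * W t) = W x"
    and Wv: "W v = 0" and G: "\<And>x. x \<noteq> v \<Longrightarrow> G x x = 0"
  shows "W x = 0"
proof (induction "card {s. x < s}" arbitrary: x rule: less_induct)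
  case less
  show ?case
  proof (cases "x \<le> v")
    case False
    then show ?thesis using fx[of x] by (simp add: empty_interval)
  next
    case True
    show ?thesis
    proof (cases "x = v")
      case True then show ?thesis using Wv by simp
    next
      case False
      have "\<forall>t\<in>{t. x < t \<and> t \<le> v}. W t = 0"
      proof
        fix t assume t: "t \<in> {t. x < t \<and> t \<le> v}"
        have "card {s. t < s} < card {s. x < s}"
          using t by (auto intro!: psubset_card_mono)
        then show "W t = 0" by (rule less)
      qed
      then have "(\<Sum>t\<in>{t. x < t \<and> t \<le> v}. G x t * W t) = 0" by simp
      then show ?thesis using fx[of x] sum_interval_split[OF True, of "\<lambda>t. G x t * W t"] G[OF False]
        by simp
    qed
  qed
qed

lemma conj_family:
  fixes F :: "'a::{order,finite} \<Rightarrow> 'a \<Rightarrow> 'a \<Rightarrow> 'k::field"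
  assumes inc: "\<And>u. F u \<in> incidence"
    and diag: "\<And>u x. F u x x = (if x = u then 1 else 0)"
    and comm: "\<And>u v. imult (F u) (F v) = imult (F v) (F u)"
  shows "\<exists>\<beta>\<in>incidence. (\<forall>x. \<beta> x x = 1) \<and> (\<forall>u. imult (F u) \<beta> = imult \<beta> (ebas u u))"
proof -
  define \<beta> where "\<beta> = (\<lambda>x v. colv (F v) v x)"
  have binc: "\<beta> \<in> incidence" by (auto simp: \<beta>_def incidence_def colv_not)
  have bdiag: "\<beta> x x = 1" for x by (simp add: \<beta>_def colv_self)
  have P1: "imult (F v) \<beta> x v = \<beta> x v" for x v
  proof (cases "x \<le> v")
    case False
    then show ?thesis using binc by (auto simp: imult_def incidenceD empty_interval)
  next
    case True
    show ?thesis
    proof (cases "x = v")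
      case True
      then show ?thesis by (simp add: imult_def sum_interval_single diag bdiag)
    next
      case False
      with True have xv: "x < v" by simp
      have "imult (F v) \<beta> x v = F v x x * \<beta> x v + (\<Sum>t\<in>{t. x < t \<and> t \<le> v}. F v x t * \<beta> t v)"
        unfolding imult_def using True by (rule sum_interval_split)
      also have "\<dots> = \<beta> x v"
        using xv False by (simp add: diag \<beta>_def colv_less[of x v])
      finally show ?thesis .
    qed
  qed
  have P2: "imult (F u) \<beta> x v = 0" if uv: "u \<noteq> v" for u x v
  proof -
    define W where "W = (\<lambda>x. imult (F u) \<beta> x v)"
    have fx: "(\<Sum>t\<in>{t. x \<le> t \<and> t \<le> v}. F v x t * W t) = W x" for x
    proof -
      have "(\<Sum>t\<in>{t. x \<le> t \<and> t \<le> v}. F v x t * W t) = imult (F v) (imult (F u) \<beta>) x v"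
        by (simp add: imult_def W_def)
      also have "\<dots> = imult (F u) (imult (F v) \<beta>) x v"
        by (simp add: imult_assoc[symmetric] comm)
      also have "\<dots> = W x"
        unfolding imult_def[of "F u" "imult (F v) \<beta>"] W_def imult_def[of "F u" \<beta>]
        by (simp add: P1)
      finally show ?thesis .
    qed
    have Wv: "W v = 0" using uv by (simp add: W_def imult_def sum_interval_single diag)
    show ?thesis using fixed_zero[where v=v and G="F v" and W=W, OF fx Wv] diag by (simp add: W_def)
  qed
  have "imult (F u) \<beta> = imult \<beta> (ebas u u)" for u
  proof (intro ext)
    fix x v
    have "imult \<beta> (ebas u u) x v = (\<Sum>t\<in>{t. x \<le> t \<and> t \<le> v}. if t = u then (if v = u then \<beta> x t else 0) else 0)"
      unfolding imult_def ebas_def by (intro sum.cong) auto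
    also have "\<dots> = (if v = u then \<beta> x v else 0)"
      using binc by (auto simp: incidenceD)
    finally show "imult (F u) \<beta> x v = imult \<beta> (ebas u u) x v"
      using P1 P2 by auto
  qed
  then show ?thesis using binc bdiag by blast
qed

lemma ilen_set_finite: "finite {card C - 1 | C. C \<subseteq> {x..y} \<and> C \<noteq> {} \<and> Complete_Partial_Order.chain (\<le>) (C::'a::{order,finite} set)}"
  by (rule finite_subset[of _ "(\<lambda>C. card C - 1) ` UNIV"]) auto

lemma ilen_ge:
  assumes "C \<subseteq> {x..y}" "C \<noteq> {}" "Complete_Partial_Order.chain (\<le>) (C::'a::{order,finite} set)"
  shows "card C - 1 \<le> ilen x y"
  unfolding ilen_def using assms by (intro Max_ge[OF ilen_set_finite]) blast

lemma ilen_ex: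
  assumes "(x::'a::{order,finite}) \<le> y"
  shows "\<exists>C. C \<subseteq> {x..y} \<and> C \<noteq> {} \<and> Complete_Partial_Order.chain (\<le>) C \<and> card C - 1 = ilen x y"
proof -
  have ne: "{card C - 1 | C. C \<subseteq> {x..y} \<and> C \<noteq> {} \<and> Complete_Partial_Order.chain (\<le>) C} \<noteq> {}"
    using assms by (auto intro!: exI[of _ "{x}"] simp: chain_def)
  show ?thesis using Max_in[OF ilen_set_finite ne] unfolding ilen_def by auto
qed

lemma ilen_refl: "ilen (x::'a::{order,finite}) x = 0"
proof -
  obtain C where C: "C \<subseteq> {x..x}" "C \<noteq> {}" "card C - 1 = ilen x x"
    using ilen_ex[of x x] by auto
  then have "C = {x}" by auto
  with C show ?thesis by simp
qed

lemma ilen_strict: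
  assumes "(u::'a::{order,finite}) \<le> x" "x \<le> y" "y \<le> v" "(u, v) \<noteq> (x, y)"
  shows "ilen x y < ilen u v"
proof -
  obtain C where C: "C \<subseteq> {x..y}" "C \<noteq> {}" "Complete_Partial_Order.chain (\<le>) C" "card C - 1 = ilen x y"
    using ilen_ex[OF assms(2)] by auto
  have fC: "finite C" by simp
  have cpos: "card C \<ge> 1" using C(2) fC by (simp add: Suc_le_eq card_gt_0_iff)
  obtain w where w: "w \<notin> C" "insert w C \<subseteq> {u..v}" "Complete_Partial_Order.chain (\<le>) (insert w C)"
  proof (cases "u = x")
    case False
    then have ux: "u < x" using assms(1) by simp
    show ?thesis
    proof (rule that[of u])
      show "u \<notin> C"
      proof
        assume "u \<in> C" then have "x \<le> u" using C(1) by auto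
        then show False using ux by simp
      qed
      show "insert u C \<subseteq> {u..v}"
      proof
        fix c assume "c \<in> insert u C"
        moreover have "c \<in> C \<Longrightarrow> x \<le> c \<and> c \<le> y" using C(1) by auto
        ultimately show "c \<in> {u..v}" using assms order_trans[of u x c] order_trans[of c y v] by auto
      qed
      have uc: "u \<le> c" if "c \<in> C" for c
      proof -
        have "x \<le> c" using C(1) that by auto
        then show ?thesis using ux by simp
      qed
      show "Complete_Partial_Order.chain (\<le>) (insert u C)"
        using C(3) uc unfolding chain_def by auto
    qed
  next
    case True
    then have yv: "y < v" using assms by auto
    show ?thesis
    proof (rule that[of v])
      show "v \<notin> C"
      proof
        assume "v \<in> C" then have "v \<le> y" using C(1) by auto
        then show False using yv by simp
      qed
      show "insert v C \<subseteq> {u..v}"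
      proof
        fix c assume "c \<in> insert v C"
        moreover have "c \<in> C \<Longrightarrow> x \<le> c \<and> c \<le> y" using C(1) by auto
        ultimately show "c \<in> {u..v}" using assms order_trans[of u x c] order_trans[of c y v] by auto
      qed
      have vc: "c \<le> v" if "c \<in> C" for c
      proof -
        have "c \<le> y" using C(1) that by auto
        then show ?thesis using yv by simp
      qed
      show "Complete_Partial_Order.chain (\<le>) (insert v C)"
        using C(3) vc unfolding chain_def by auto
    qed
  qed
  have "card (insert w C) - 1 \<le> ilen u v"
    using w by (intro ilen_ge) auto
  moreover have "card (insert w C) = card C + 1" using w(1) fC by simp
  ultimately show ?thesis using C(4) cpos by simp
qed

lemma conj_entry:
  assumes "x \<le> y"
  shows "imult (imult \<beta> (ebas x y)) \<gamma> u v = (if u \<le> x \<and> y \<le> v then \<beta> u x * \<gamma> y v else 0)"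
proof -
  have inner: "imult \<beta> (ebas x y) = (\<lambda>u t. if t = y \<and> u \<le> x then \<beta> u x else 0)"
  proof (intro ext)
    fix u t
    have "imult \<beta> (ebas x y) u t = (\<Sum>s\<in>{s. u \<le> s \<and> s \<le> t}. if s = x then (if t = y then \<beta> u s else 0) else 0)"
      unfolding imult_def ebas_def by (intro sum.cong) auto
    also have "\<dots> = (if t = y \<and> u \<le> x then \<beta> u x else 0)"
      using assms by auto
    finally show "imult \<beta> (ebas x y) u t = (if t = y \<and> u \<le> x then \<beta> u x else 0)" .
  qed
  have "imult (imult \<beta> (ebas x y)) \<gamma> u v = imult (\<lambda>u t. if t = y \<and> u \<le> x then \<beta> u x else 0) \<gamma> u v"
    by (simp only: inner)
  also have "\<dots> = (\<Sum>t\<in>{t. u \<le> t \<and> t \<le> v}. if t = y then (if u \<le> x then \<beta> u x * \<gamma> t v else 0) else 0)"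
    unfolding imult_def by (intro sum.cong) auto
  also have "\<dots> = (if u \<le> x \<and> y \<le> v then \<beta> u x * \<gamma> y v else 0)"
    using assms by (auto dest: order_trans)
  finally show ?thesis .
qed

lemma Lcomp_conj:
  assumes "x \<le> y" "\<forall>a. \<beta> a a = 1" "\<forall>a. \<gamma> a a = 1"
  shows "Lcomp (ilen x y) (imult (imult \<beta> (ebas x y)) \<gamma>) = ebas x y"
proof (intro ext)
  fix u v
  show "Lcomp (ilen x y) (imult (imult \<beta> (ebas x y)) \<gamma>) u v = ebas x y u v"
  proof (cases "(u, v) = (x, y)")
    case True then show ?thesis unfolding Lcomp_def conj_entry[OF assms(1)] using assms by (simp add: ebas_def)
  next
    case False
    then have "\<not> (u \<le> x \<and> y \<le> v \<and> ilen u v = ilen x y)"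
      using ilen_strict[of u x y v] assms(1) by auto
    then show ?thesis using False unfolding Lcomp_def conj_entry[OF assms(1)] by (auto simp: ebas_def)
  qed
qed

lemma tilde_ebas:
  assumes "x \<le> y"
  shows "tilde \<phi> (ebas x y) = Lcomp (ilen x y) (\<phi> (ebas x y))"
proof (intro ext)
  fix u v
  have "tilde \<phi> (ebas x y) u v = (\<Sum>p\<in>{p. fst p \<le> snd p}. if p = (x, y) then Lcomp (ilen (fst p) (snd p)) (\<phi> (ebas (fst p) (snd p))) u v else 0)"
    unfolding tilde_def sum_fun_apply2 by (intro sum.cong refl) (auto simp: ebas_def)
  also have "\<dots> = Lcomp (ilen x y) (\<phi> (ebas x y)) u v" using assms by simp
  finally show "tilde \<phi> (ebas x y) u v = Lcomp (ilen x y) (\<phi> (ebas x y)) u v" .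
qed

lemma tilde_add: "tilde \<phi> (f + g) = tilde \<phi> f + tilde \<phi> g"
  unfolding tilde_def by (intro ext) (simp add: sum_fun_apply2 algebra_simps sum.distrib)

lemma tilde_smult: "tilde \<phi> (\<lambda>x y. c * f x y) = (\<lambda>x y. c * tilde \<phi> f x y)"
  unfolding tilde_def by (intro ext) (simp add: sum_fun_apply2 algebra_simps sum_distrib_left)

lemma sum_inc: "(\<And>p. p \<in> S \<Longrightarrow> g p \<in> incidence) \<Longrightarrow> sum g S \<in> incidence"
  by (induction S rule: infinite_finite_induct) (auto simp: incidence_def)

lemma add_inc: "f \<in> incidence \<Longrightarrow> g \<in> incidence \<Longrightarrow> f + g \<in> incidence"
  by (auto simp: incidence_def)

lemma smult_inc: "f \<in> incidence \<Longrightarrow> (\<lambda>x y. c * f x y) \<in> incidence"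
  by (auto simp: incidence_def)

lemma decomp:
  assumes "f \<in> incidence"
  shows "f = (\<Sum>p\<in>{p::'a::{order,finite} \<times> 'a. fst p \<le> snd p}. (\<lambda>u v. f (fst p) (snd p) * ebas (fst p) (snd p) u v))"
proof (intro ext)
  fix u v :: 'a
  have "(\<Sum>p\<in>{p::'a \<times> 'a. fst p \<le> snd p}. (\<lambda>u v. f (fst p) (snd p) * ebas (fst p) (snd p) u v)) u v
     = (\<Sum>p\<in>{p::'a \<times> 'a. fst p \<le> snd p}. if p = (u, v) then f u v else 0)"
    unfolding sum_fun_apply2 by (intro sum.cong refl) (auto simp: ebas_def)
  also have "\<dots> = f u v" using assms by (auto simp: incidenceD)
  finally show "f u v = (\<Sum>p\<in>{p::'a \<times> 'a. fst p \<le> snd p}. (\<lambda>u v. f (fst p) (snd p) * ebas (fst p) (snd p) u v)) u v" by simp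
qed

lemma lin_ext:
  fixes A B :: "('a::{order,finite} \<Rightarrow> 'a \<Rightarrow> 'k::field) \<Rightarrow> ('a \<Rightarrow> 'a \<Rightarrow> 'k)"
  assumes addA: "\<And>f g. f \<in> incidence \<Longrightarrow> g \<in> incidence \<Longrightarrow> A (f + g) = A f + A g"
    and smA: "\<And>c f. f \<in> incidence \<Longrightarrow> A (\<lambda>x y. c * f x y) = (\<lambda>x y. c * A f x y)"
    and addB: "\<And>f g. f \<in> incidence \<Longrightarrow> g \<in> incidence \<Longrightarrow> B (f + g) = B f + B g"
    and smB: "\<And>c f. f \<in> incidence \<Longrightarrow> B (\<lambda>x y. c * f x y) = (\<lambda>x y. c * B f x y)"
    and bas: "\<And>x y. x \<le> y \<Longrightarrow> A (ebas x y) = B (ebas x y)"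
    and f: "f \<in> incidence"
  shows "A f = B f"
proof -
  define T where "T = (\<lambda>p::'a \<times> 'a. (\<lambda>u v. f (fst p) (snd p) * ebas (fst p) (snd p) u v))"
  have Tinc: "p \<in> {p. fst p \<le> snd p} \<Longrightarrow> T p \<in> incidence" for p
    unfolding T_def by (rule smult_inc) (auto intro: ebas_inc)
  have A0: "A 0 = 0"
  proof -
    have "A (0 + 0) = A 0 + A 0" by (rule addA) (auto simp: incidence_def)
    then show ?thesis by simp
  qed
  have B0: "B 0 = 0"
  proof -
    have "B (0 + 0) = B 0 + B 0" by (rule addB) (auto simp: incidence_def)
    then show ?thesis by simp
  qed
  have "S \<subseteq> {p. fst p \<le> snd p} \<Longrightarrow> A (sum T S) = B (sum T S)" for S
  proof (induction S rule: infinite_finite_induct)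
    case (infinite S) then show ?case by simp
  next
    case empty then show ?case by (simp only: sum.empty A0 B0)
  next
    case (insert p S)
    have sinc: "sum T S \<in> incidence" using insert Tinc by (intro sum_inc) auto
    have pinc: "T p \<in> incidence" using insert Tinc by auto
    have "A (T p) = B (T p)"
      unfolding T_def using insert bas[of "fst p" "snd p"]
      by (simp add: smA smB ebas_inc)
    have IH: "A (sum T S) = B (sum T S)" using insert by auto
    have e: "sum T (insert p S) = T p + sum T S" using insert.hyps by (rule sum.insert)
    show ?case unfolding e
      by (simp only: addA[OF pinc sinc] addB[OF pinc sinc] \<open>A (T p) = B (T p)\<close> IH)
  qed
  then have "A (sum T {p. fst p \<le> snd p}) = B (sum T {p. fst p \<le> snd p})" by simp
  then show ?thesis using decomp[OF f] unfolding T_def by simp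
qed

lemma imult_diff_left: "imult (f - g) h = imult f h - imult g h"
  by (intro ext) (simp add: imult_def algebra_simps sum_subtractf)
lemma imult_diff_right: "imult h (f - g) = imult h f - imult h g"
  by (intro ext) (simp add: imult_def algebra_simps sum_subtractf)

lemma cancel_lemma: "imult g b = iunit \<Longrightarrow> X \<in> incidence \<Longrightarrow> imult g (imult b X) = X"
  by (simp add: imult_assoc[symmetric] imult_iunit_left)

lemma conj_bracket:
  assumes gb: "imult \<gamma> \<beta> = iunit"
  shows "ibracket (imult (imult \<beta> f) \<gamma>) (imult (imult \<beta> g) \<gamma>) = imult (imult \<beta> (ibracket f g)) \<gamma>"
proof -
  have c: "imult \<gamma> (imult \<beta> (imult X \<gamma>)) = imult X \<gamma>" for X
    using cancel_lemma[OF gb imult_inc] .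
  show ?thesis
    unfolding ibracket_def imult_diff_left imult_diff_right
    by (simp add: imult_assoc c)
qed

lemma Lcomp_smult: "Lcomp i (\<lambda>a b. c * g a b) = (\<lambda>a b. c * Lcomp i g a b)"
  by (intro ext) (simp add: Lcomp_def)

lemma bracket_diag:
  assumes "h \<in> incidence"
  shows "ibracket (ebas u u) h = (\<lambda>a b. ((if a = u then 1 else 0) - (if b = u then 1 else 0)) * h a b)"
proof (intro ext)
  fix a b
  have l: "imult (ebas u u) h a b = (if a = u then h a b else 0)"
  proof -
    have "imult (ebas u u) h a b = (\<Sum>t\<in>{t. a \<le> t \<and> t \<le> b}. if t = a then (if a = u then h t b else 0) else 0)"
      unfolding imult_def ebas_def by (intro sum.cong) auto
    then show ?thesis using assms by (auto simp: incidenceD)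
  qed
  have r: "imult h (ebas u u) a b = (if b = u then h a b else 0)"
  proof -
    have "imult h (ebas u u) a b = (\<Sum>t\<in>{t. a \<le> t \<and> t \<le> b}. if t = b then (if b = u then h a t else 0) else 0)"
      unfolding imult_def ebas_def by (intro sum.cong) auto
    then show ?thesis using assms by (auto simp: incidenceD)
  qed
  show "ibracket (ebas u u) h a b = ((if a = u then 1 else 0) - (if b = u then 1 else 0)) * h a b"
    unfolding ibracket_def using l r by simp
qed

lemma ibracket_inc: "ibracket f g \<in> incidence"
  using imult_inc[of f g] imult_inc[of g f] by (auto simp: ibracket_def incidence_def)

lemma backward:
  fixes \<phi> :: "('a::{order,finite} \<Rightarrow> 'a \<Rightarrow> 'k::field) \<Rightarrow> ('a \<Rightarrow> 'a \<Rightarrow> 'k)"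
  assumes "Inn1 \<phi>"
  shows "\<phi> \<in> LAut \<and> (\<forall>f\<in>incidence. tilde \<phi> f = f)"
proof -
  obtain \<beta> \<gamma> where b: "\<beta> \<in> incidence" "\<gamma> \<in> incidence" "\<forall>x. \<beta> x x = 1"
      "imult \<beta> \<gamma> = iunit" "imult \<gamma> \<beta> = iunit" and ph: "\<forall>f\<in>incidence. \<phi> f = imult (imult \<beta> f) \<gamma>"
    using assms unfolding Inn1_def by blast
  have gdiag: "\<forall>y. \<gamma> y y = 1"
  proof
    fix y
    have "imult \<beta> \<gamma> y y = iunit y y" using b(4) by simp
    then show "\<gamma> y y = 1" using b(3) by (simp add: imult_def sum_interval_single iunit_def)
  qed
  have c1: "imult \<gamma> (imult \<beta> X) = X" if "X \<in> incidence" for X using cancel_lemma[OF b(5) that] .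
  have c2: "imult \<beta> (imult \<gamma> X) = X" if "X \<in> incidence" for X using cancel_lemma[OF b(4) that] .
  have bij: "bij_betw \<phi> incidence incidence"
  proof (rule bij_betw_byWitness[where f' = "\<lambda>g. imult (imult \<gamma> g) \<beta>"])
    show "\<forall>a\<in>incidence. imult (imult \<gamma> (\<phi> a)) \<beta> = a"
      using ph by (simp add: imult_assoc c1 imult_inc b(5) imult_iunit_right)
    show "\<forall>a\<in>incidence. \<phi> (imult (imult \<gamma> a) \<beta>) = a"
      using ph by (simp add: imult_assoc c2 imult_inc b(4) imult_iunit_right)
    show "\<phi> ` incidence \<subseteq> incidence" using ph by (auto simp: imult_inc)
    show "(\<lambda>g. imult (imult \<gamma> g) \<beta>) ` incidence \<subseteq> incidence" by (auto simp: imult_inc)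
  qed
  have add: "\<forall>f\<in>incidence. \<forall>g\<in>incidence. \<phi> (f + g) = \<phi> f + \<phi> g"
    using ph by (simp add: add_inc imult_add_left imult_add_right)
  have sm: "\<forall>c. \<forall>f\<in>incidence. \<phi> (\<lambda>x y. c * f x y) = (\<lambda>x y. c * \<phi> f x y)"
    using ph by (simp add: smult_inc imult_smult_left imult_smult_right)
  have br: "\<forall>f\<in>incidence. \<forall>g\<in>incidence. \<phi> (ibracket f g) = ibracket (\<phi> f) (\<phi> g)"
    using ph by (simp add: ibracket_inc conj_bracket[OF b(5)])
  have L: "\<phi> \<in> LAut" unfolding LAut_def using bij add sm br by blast
  have T: "tilde \<phi> f = f" if f: "f \<in> incidence" for f
  proof (rule lin_ext[where B = "\<lambda>f. f", OF _ _ _ _ _ f])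
    show "tilde \<phi> (f + g) = tilde \<phi> f + tilde \<phi> g" for f g by (rule tilde_add)
    show "tilde \<phi> (\<lambda>x y. c * f x y) = (\<lambda>x y. c * tilde \<phi> f x y)" for c f by (rule tilde_smult)
    show "tilde \<phi> (ebas x y) = ebas x y" if "x \<le> y" for x y
    proof -
      have "\<phi> (ebas x y) = imult (imult \<beta> (ebas x y)) \<gamma>" using ph ebas_inc[OF that] by blast
      then show ?thesis
        using Lcomp_conj[where \<beta>=\<beta> and \<gamma>=\<gamma>, OF that b(3) gdiag] by (simp add: tilde_ebas[OF that])
    qed
  qed auto
  show ?thesis using L T by blast
qed

lemma forward:
  fixes \<phi> :: "('a::{order,finite} \<Rightarrow> 'a \<Rightarrow> 'k::field) \<Rightarrow> ('a \<Rightarrow> 'a \<Rightarrow> 'k)"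
  assumes L: "\<phi> \<in> LAut" and T: "\<forall>f\<in>incidence. tilde \<phi> f = f"
  shows "Inn1 \<phi>"
proof -
  have bij: "bij_betw \<phi> incidence incidence"
    and add: "\<And>f g. f \<in> incidence \<Longrightarrow> g \<in> incidence \<Longrightarrow> \<phi> (f + g) = \<phi> f + \<phi> g"
    and sm: "\<And>c f. f \<in> incidence \<Longrightarrow> \<phi> (\<lambda>x y. c * f x y) = (\<lambda>x y. c * \<phi> f x y)"
    and br: "\<And>f g. f \<in> incidence \<Longrightarrow> g \<in> incidence \<Longrightarrow> \<phi> (ibracket f g) = ibracket (\<phi> f) (\<phi> g)"
    using L unfolding LAut_def by blast+
  have pinc: "\<phi> f \<in> incidence" if "f \<in> incidence" for f using bij_betw_apply[OF bij that] .
  have p0: "\<phi> 0 = 0"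
  proof -
    have z: "(0::'a \<Rightarrow> 'a \<Rightarrow> 'k) \<in> incidence" by (simp add: incidence_def)
    have "\<phi> (0 + 0) = \<phi> 0 + \<phi> 0" using add[OF z z] .
    then show ?thesis by simp
  qed
  have Lc: "Lcomp (ilen x y) (\<phi> (ebas x y)) = ebas x y" if "x \<le> y" for x y
  proof -
    have "tilde \<phi> (ebas x y) = ebas x y" using T ebas_inc[OF that] by blast
    then show ?thesis using tilde_ebas[OF that, of \<phi>] by simp
  qed
  define F where "F = (\<lambda>u. \<phi> (ebas u u))"
  have Finc: "F u \<in> incidence" for u unfolding F_def by (rule pinc[OF ebas_inc]) simp
  have Fdiag: "F u x x = (if x = u then 1 else 0)" for u x
  proof -
    have "Lcomp (ilen u u) (F u) x x = ebas u u x x" using Lc[of u u] by (simp add: F_def)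
    then show ?thesis by (simp add: Lcomp_def ilen_refl ebas_def)
  qed
  have Fcomm: "imult (F u) (F v) = imult (F v) (F u)" for u v
  proof -
    have "ibracket (ebas u u) (ebas v v) = 0"
      unfolding bracket_diag[OF ebas_inc[of v v, OF order_refl]] by (intro ext) (simp add: ebas_def)
    then have "ibracket (F u) (F v) = 0" unfolding F_def
      using br[OF ebas_inc ebas_inc, of u u v v] p0 by (metis order_refl)
    then show ?thesis by (simp add: ibracket_def)
  qed
  obtain \<beta> where bb: "\<beta> \<in> incidence" "\<forall>x. \<beta> x x = 1" "\<And>u. imult (F u) \<beta> = imult \<beta> (ebas u u)"
    using conj_family[OF Finc Fdiag Fcomm] by blast
  obtain \<gamma> where gg: "\<gamma> \<in> incidence" "\<forall>x. \<gamma> x x = 1" "imult \<beta> \<gamma> = iunit" "imult \<gamma> \<beta> = iunit"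
    using two_sided_inv[OF bb(1,2)] by blast
  have c1: "imult \<gamma> (imult \<beta> X) = X" if "X \<in> incidence" for X using cancel_lemma[OF gg(4) that] .
  have c2: "imult \<beta> (imult \<gamma> X) = X" if "X \<in> incidence" for X using cancel_lemma[OF gg(3) that] .
  have Fconj: "F u = imult (imult \<beta> (ebas u u)) \<gamma>" for u
  proof -
    have "F u = imult (F u) (imult \<beta> \<gamma>)" using gg(3) Finc by (simp add: imult_iunit_right)
    also have "\<dots> = imult (imult \<beta> (ebas u u)) \<gamma>" by (simp add: imult_assoc[symmetric] bb(3))
    finally show ?thesis .
  qed
  have eu: "ebas u u = imult (imult \<gamma> (F u)) \<beta>" for u
    unfolding Fconj by (simp add: imult_assoc c1 imult_inc gg(4) imult_iunit_right ebas_inc)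
  have bas: "\<phi> (ebas x y) = imult (imult \<beta> (ebas x y)) \<gamma>" if xy: "x \<le> y" for x y
  proof (cases "x = y")
    case True then show ?thesis using Fconj[of x] by (simp add: F_def)
  next
    case False
    with xy have xy': "x < y" by simp
    define G where "G = \<phi> (ebas x y)"
    have Ginc: "G \<in> incidence" unfolding G_def by (rule pinc[OF ebas_inc[OF xy]])
    define h where "h = imult (imult \<gamma> G) \<beta>"
    have hinc: "h \<in> incidence" unfolding h_def by (rule imult_inc)
    have eig: "ibracket (ebas u u) h = (\<lambda>a b. ((if x = u then 1 else 0) - (if y = u then 1 else 0)) * h a b)" for u
    proof -
      define c where "c = ((if x = u then 1 else 0) - (if y = u then 1 else 0) :: 'k)"
      have e1: "ibracket (ebas u u) (ebas x y) = (\<lambda>a b. c * ebas x y a b)"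
        unfolding bracket_diag[OF ebas_inc[OF xy]] by (intro ext) (simp add: ebas_def c_def)
      have "ibracket (F u) G = \<phi> (ibracket (ebas u u) (ebas x y))"
        unfolding F_def G_def using br[OF ebas_inc ebas_inc[OF xy], of u u] by simp
      also have "\<dots> = (\<lambda>a b. c * G a b)" unfolding e1 G_def by (rule sm[OF ebas_inc[OF xy]])
      finally have e2: "ibracket (F u) G = (\<lambda>a b. c * G a b)" .
      have "ibracket (ebas u u) h = ibracket (imult (imult \<gamma> (F u)) \<beta>) (imult (imult \<gamma> G) \<beta>)"
        unfolding h_def using eu[of u] by simp
      also have "\<dots> = imult (imult \<gamma> (ibracket (F u) G)) \<beta>" by (rule conj_bracket[OF gg(3)])
      also have "\<dots> = (\<lambda>a b. c * h a b)" unfolding e2 h_def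
        by (simp add: imult_smult_left imult_smult_right)
      finally show ?thesis unfolding c_def .
    qed
    have hform: "h = (\<lambda>a b. h x y * ebas x y a b)"
    proof (intro ext)
      fix a b
      show "h a b = h x y * ebas x y a b"
      proof (cases "(a, b) = (x, y)")
        case True then show ?thesis by (simp add: ebas_def)
      next
        case False
        have "h a b = 0"
        proof (rule ccontr)
          assume nz: "h a b \<noteq> 0"
          have ab: "a \<le> b" using hinc nz by (auto simp: incidence_def)
          have k: "((if a = u then 1 else 0) - (if b = u then 1 else 0)) = ((if x = u then 1 else 0) - (if y = u then 1 else (0::'k)))" for u
          proof -
            have "ibracket (ebas u u) h a b = ((if a = u then 1 else 0) - (if b = u then 1 else 0)) * h a b"
              by (simp add: bracket_diag[OF hinc])
            then show ?thesis using eig[of u] nz by simp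
          qed
          have kx: "((if a = x then 1 else 0) - (if b = x then 1 else 0)) = (1::'k)" using k[of x] xy' by simp
          have ky: "((if a = y then 1 else 0) - (if b = y then 1 else 0)) = (-1::'k)" using k[of y] xy' by simp
          show False
          proof (cases "a = x")
            case True
            then have "b \<noteq> x" using kx by auto
            then have "b = y" using ky True xy' by (auto split: if_splits)
            then show False using True False by simp
          next
            case ax: False
            then have bx: "b = x" using kx by (auto split: if_splits)
            then have "a = y" using ky xy' by (auto split: if_splits)
            then show False using bx ab xy' by simp
          qed
        qed
        then show ?thesis using False by (auto simp: ebas_def)
      qed
    qed
    have Gh: "G = imult (imult \<beta> h) \<gamma>"
      unfolding h_def by (simp add: imult_assoc c2 imult_inc gg(3) imult_iunit_right Ginc)
    also have "\<dots> = (\<lambda>a b. h x y * imult (imult \<beta> (ebas x y)) \<gamma> a b)"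
      by (subst hform) (simp add: imult_smult_left imult_smult_right)
    finally have G2: "G = (\<lambda>a b. h x y * imult (imult \<beta> (ebas x y)) \<gamma> a b)" .
    have "Lcomp (ilen x y) G x y = 1" using Lc[OF xy] by (simp add: G_def ebas_def)
    moreover have "Lcomp (ilen x y) G x y = h x y"
      unfolding G2 Lcomp_smult Lcomp_conj[where \<beta>=\<beta> and \<gamma>=\<gamma>, OF xy bb(2) gg(2)] by (simp add: ebas_def)
    ultimately have "h x y = 1" by simp
    then show ?thesis using G2 unfolding G_def by simp
  qed
  have "\<forall>f\<in>incidence. \<phi> f = imult (imult \<beta> f) \<gamma>"
  proof
    fix f :: "'a \<Rightarrow> 'a \<Rightarrow> 'k" assume f: "f \<in> incidence"
    show "\<phi> f = imult (imult \<beta> f) \<gamma>"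
    proof (rule lin_ext[where A = \<phi> and B = "\<lambda>f. imult (imult \<beta> f) \<gamma>", OF _ _ _ _ _ f])
      show "imult (imult \<beta> (f + g)) \<gamma> = imult (imult \<beta> f) \<gamma> + imult (imult \<beta> g) \<gamma>" for f g
        by (simp add: imult_add_left imult_add_right)
      show "imult (imult \<beta> (\<lambda>x y. c * f x y)) \<gamma> = (\<lambda>x y. c * imult (imult \<beta> f) \<gamma> x y)" for c f
        by (simp add: imult_smult_left imult_smult_right)
    qed (auto simp: add sm bas)
  qed
  then show ?thesis unfolding Inn1_def using bb(1,2) gg by blast
qed

theorem proposition4p14:
  assumes "poset_connected TYPE('a::{order,finite})"
  shows "(\<phi> \<in> (LAut :: (('a \<Rightarrow> 'a \<Rightarrow> 'k::field) \<Rightarrow> _) set)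
            \<and> (\<forall>f\<in>incidence. tilde \<phi> f = f))
         \<longleftrightarrow> Inn1 \<phi>"
  using forward backward by blast

end
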